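(* Let $N\geq1$ and $0<m<2$. Let $a\in C(\mathbb{R}^N)\cap L^\infty(\mathbb{R}^N)$ with $a^+=\max\{0,a\}\not\equiv0$ and $\limsup_{|x|\to\infty}a(x)<0$. Let $J\in L^1(\mathbb{R}^N)$ be a nonnegative radially symmetric function with $\int_{\mathbb{R}^N}J=1$, and for $\varepsilon>0$ let $J_\varepsilon(z)=\varepsilon^{-N}J(z/\varepsilon)$. Suppose there exist $\varepsilon_0>0$ and a nonnegative, nontrivial $\underline{u}\in C_c(\mathbb{R}^N)$ such that for all $0<\varepsilon<\varepsilon_0$, $$\frac{1}{\varepsilon^m}\big(J_\varepsilon\ast\underline{u}-\underline{u}\big)+\underline{u}(a-\underline{u})\geq0\quad\text{in }\mathbb{R}^N.$$ Then $$\limsup_{\beta\to m^-}(m-\beta)\int_{\mathbb{R}^N}J(x)|x|^\beta\,\mathrm{d}x<\infty.$$ In particular, $\int_{\mathbb{R}^N}J(x)|x|^\beta\,\mathrm{d}x<\infty$ for all $0<\beta<m$.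
   Context: $(J_\varepsilon\ast u)(x)=\int_{\mathbb{R}^N}J_\varepsilon(x-y)u(y)\,\mathrm{d}y$. *)

theory Defs
  imports "HOL-Analysis.Analysis"
begin

definition rescaled_kernel :: "('a::euclidean_space \<Rightarrow> real) \<Rightarrow> real \<Rightarrow> 'a \<Rightarrow> real" where
  "rescaled_kernel J \<epsilon> z = J ((1 / \<epsilon>) *\<^sub>R z) / \<epsilon> ^ DIM('a)"

definition conv :: "('a::euclidean_space \<Rightarrow> real) \<Rightarrow> ('a \<Rightarrow> real) \<Rightarrow> 'a \<Rightarrow> real" where
  "conv J u x = (\<integral>y. J (x - y) * u y \<partial>lborel)"

end

theory Submission
  imports Defs
begin


lemma nn_integral_affine_eucl:
  fixes f :: "'a::euclidean_space \<Rightarrow> ennreal" and t :: 'a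
  assumes [measurable]: "f \<in> borel_measurable borel" and c: "c \<noteq> 0"
  shows "(\<integral>\<^sup>+x. f x \<partial>lborel) = ennreal (\<bar>c\<bar> ^ DIM('a)) * (\<integral>\<^sup>+x. f (t + c *\<^sub>R x) \<partial>lborel)"
  by (subst lborel_affine[OF c, of t]) (simp add: nn_integral_density nn_integral_distr nn_integral_cmult)

lemma tail_bound:
  fixes a J u :: "'a::euclidean_space \<Rightarrow> real" and m \<epsilon>\<^sub>0 :: real
  assumes m_pos: "0 < m"
    and a_bdd: "bounded (range a)"
    and J_int: "integrable lborel J"
    and J_nonneg: "\<And>x. J x \<ge> 0"
    and J_mass: "(\<integral>x. J x \<partial>lborel) = 1"
    and eps0_pos: "\<epsilon>\<^sub>0 > 0"
    and u_cont: "continuous_on UNIV u"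
    and u_supp: "compact (closure {x. u x \<noteq> 0})"
    and u_nonneg: "\<And>x. u x \<ge> 0"
    and u_nontriv: "\<exists>x. u x \<noteq> 0"
    and subsol: "\<And>\<epsilon> x. 0 < \<epsilon> \<Longrightarrow> \<epsilon> < \<epsilon>\<^sub>0 \<Longrightarrow>
        (1 / \<epsilon> powr m) * (conv (rescaled_kernel J \<epsilon>) u x - u x) + u x * (a x - u x) \<ge> 0"
  shows "\<exists>C T. 1 \<le> T \<and> 0 \<le> C \<and> (\<forall>t\<ge>T.
     (\<integral>\<^sup>+x. ennreal (J x * indicator {x. t < norm x} x) \<partial>lborel) \<le> ennreal (C * t powr (-m)))"
proof -
  have Jm[measurable]: "J \<in> borel_measurable borel"
    using borel_measurable_integrable[OF J_int] by simp
  have um[measurable]: "u \<in> borel_measurable borel"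
    using u_cont by (rule borel_measurable_continuous_onI)
  obtain A where A: "0 < A" "\<And>x. \<bar>a x\<bar> \<le> A"
    using a_bdd unfolding bounded_pos by auto
  define K where "K = closure {x. u x \<noteq> 0}"
  have sub: "{x. u x \<noteq> 0} \<subseteq> K" unfolding K_def by (rule closure_subset)
  have Kne: "K \<noteq> {}" using u_nontriv sub by auto
  obtain x0 where x0: "x0 \<in> K" "\<And>y. y \<in> K \<Longrightarrow> u y \<le> u x0"
    using continuous_attains_sup[OF u_supp[folded K_def] Kne continuous_on_subset[OF u_cont]] by auto
  define M where "M = u x0"
  have Mpos: "0 < M"
  proof -
    obtain x1 where "u x1 \<noteq> 0" using u_nontriv by auto
    moreover have "u x1 \<le> M" using x0(2)[of x1] sub \<open>u x1 \<noteq> 0\<close> M_def by auto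
    ultimately show ?thesis using u_nonneg[of x1] by linarith
  qed
  have Mge: "u y \<le> M" for y
    using x0(2)[of y] sub Mpos M_def by (cases "u y = 0") auto
  obtain R where R: "0 < R" "\<And>y. y \<in> K \<Longrightarrow> norm y \<le> R"
    using compact_imp_bounded[OF u_supp[folded K_def]] unfolding bounded_pos by auto
  have u0: "u y = 0" if "R < norm y" for y
    using R(2)[of y] sub that by force
  define P where "P t = (\<integral>x. J x * indicator {x. t < norm x} x \<partial>lborel)" for t
  define Q where "Q t = (\<integral>x. J x * indicator {x. norm x \<le> t} x \<partial>lborel)" for t
  have intP: "integrable lborel (\<lambda>x. J x * indicator {x. t < norm x} x)" for t
    by (rule integrable_real_mult_indicator) (auto simp: J_int)
  have intQ: "integrable lborel (\<lambda>x. J x * indicator {x. norm x \<le> t} x)" for t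
    by (rule integrable_real_mult_indicator) (auto simp: J_int)
  have PQ: "P t + Q t = 1" for t
  proof -
    have "P t + Q t = (\<integral>x. J x * indicator {x. t < norm x} x + J x * indicator {x. norm x \<le> t} x \<partial>lborel)"
      unfolding P_def Q_def by (rule Bochner_Integration.integral_add[symmetric, OF intP intQ])
    also have "\<dots> = (\<integral>x. J x \<partial>lborel)"
      by (rule Bochner_Integration.integral_cong) (auto simp: indicator_def)
    finally show ?thesis using J_mass by simp
  qed
  have Pnn: "0 \<le> P t" for t unfolding P_def
    by (rule integral_nonneg_AE) (auto simp: J_nonneg)
  have Qnn: "0 \<le> Q t" for t unfolding Q_def
    by (rule integral_nonneg_AE) (auto simp: J_nonneg)
  have key: "P (2*R/\<epsilon>) \<le> A * \<epsilon> powr m" if e: "0 < \<epsilon>" "\<epsilon> < \<epsilon>\<^sub>0" for \<epsilon>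
  proof -
    define cv where "cv = conv (rescaled_kernel J \<epsilon>) u x0"
    have s: "(1 / \<epsilon> powr m) * (cv - M) + M * (a x0 - M) \<ge> 0"
      using subsol[OF e, of x0] unfolding cv_def M_def by simp
    have "M * (a x0 - M) \<le> M * A"
      using Mpos A(2)[of x0] by (intro mult_left_mono) auto
    with s have "(cv - M) / \<epsilon> powr m \<ge> - (M * A)" by simp
    hence h1: "cv - M \<ge> - (M * A) * \<epsilon> powr m"
      using e by (simp add: le_divide_eq)
    have h2: "cv \<le> M * Q (2*R/\<epsilon>)"
    proof -
      have gm: "(\<lambda>y. rescaled_kernel J \<epsilon> (x0 - y) * u y) \<in> borel_measurable lborel"
        unfolding rescaled_kernel_def by measurable
      have cv_eq: "cv = enn2real (\<integral>\<^sup>+y. ennreal (rescaled_kernel J \<epsilon> (x0 - y) * u y) \<partial>lborel)"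
        unfolding cv_def conv_def
        by (rule integral_eq_nn_integral[OF gm]) (use e in \<open>auto simp: rescaled_kernel_def J_nonneg u_nonneg intro!: divide_nonneg_pos\<close>)
      have "(\<integral>\<^sup>+y. ennreal (rescaled_kernel J \<epsilon> (x0 - y) * u y) \<partial>lborel)
         = ennreal (\<bar>-\<epsilon>\<bar> ^ DIM('a)) * (\<integral>\<^sup>+z. ennreal (rescaled_kernel J \<epsilon> (x0 - (x0 + (-\<epsilon>) *\<^sub>R z)) * u (x0 + (-\<epsilon>) *\<^sub>R z)) \<partial>lborel)"
        by (rule nn_integral_affine_eucl) (use e in \<open>auto simp: rescaled_kernel_def\<close>)
      also have "\<dots> = (\<integral>\<^sup>+z. ennreal (\<epsilon> ^ DIM('a)) * ennreal (rescaled_kernel J \<epsilon> (x0 - (x0 + (-\<epsilon>) *\<^sub>R z)) * u (x0 + (-\<epsilon>) *\<^sub>R z)) \<partial>lborel)"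
        using e by (subst nn_integral_cmult) (auto simp: rescaled_kernel_def)
      also have "\<dots> = (\<integral>\<^sup>+z. ennreal (J z * u (x0 - \<epsilon> *\<^sub>R z)) \<partial>lborel)"
        using e by (intro nn_integral_cong) (simp add: rescaled_kernel_def ennreal_mult[symmetric] J_nonneg u_nonneg)
      also have "\<dots> \<le> (\<integral>\<^sup>+z. ennreal (M * (J z * indicator {x. norm x \<le> 2*R/\<epsilon>} z)) \<partial>lborel)"
      proof (intro nn_integral_mono ennreal_leI)
        fix z
        show "J z * u (x0 - \<epsilon> *\<^sub>R z) \<le> M * (J z * indicator {x. norm x \<le> 2*R/\<epsilon>} z)"
        proof (cases "norm z \<le> 2*R/\<epsilon>")
          case True
          then show ?thesis using Mge[of "x0 - \<epsilon> *\<^sub>R z"] J_nonneg[of z]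
            by (auto simp: mult.commute[of M] intro: mult_left_mono)
        next
          case False
          have "2*R < \<epsilon> * norm z" using False e by (auto simp: not_le pos_divide_less_eq mult.commute)
          moreover have "norm x0 \<le> R" using R(2) x0(1) by auto
          moreover have "\<epsilon> * norm z \<le> norm (x0 - \<epsilon> *\<^sub>R z) + norm x0"
            using norm_triangle_ineq4[of x0 "x0 - \<epsilon> *\<^sub>R z"] e by simp
          ultimately have "R < norm (x0 - \<epsilon> *\<^sub>R z)" by linarith
          then show ?thesis using False u0 by simp
        qed
      qed
      also have "\<dots> = ennreal (\<integral>z. M * (J z * indicator {x. norm x \<le> 2*R/\<epsilon>} z) \<partial>lborel)"
        by (rule nn_integral_eq_integral) (use intQ Mpos J_nonneg in auto)
      also have "\<dots> = ennreal (M * Q (2*R/\<epsilon>))"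
        unfolding Q_def by simp
      finally have le: "(\<integral>\<^sup>+y. ennreal (rescaled_kernel J \<epsilon> (x0 - y) * u y) \<partial>lborel) \<le> ennreal (M * Q (2*R/\<epsilon>))" .
      show ?thesis unfolding cv_eq
        using enn2real_mono[OF le] Mpos Qnn by simp
    qed
    have "M * P (2*R/\<epsilon>) \<le> M * (A * \<epsilon> powr m)"
    proof -
      have "P (2*R/\<epsilon>) = 1 - Q (2*R/\<epsilon>)" using PQ[of "2*R/\<epsilon>"] by linarith
      hence "M * P (2*R/\<epsilon>) = M - M * Q (2*R/\<epsilon>)" by (simp add: right_diff_distrib)
      thus ?thesis using h1 h2 by (simp add: algebra_simps)
    qed
    then show ?thesis using Mpos by simp
  qed
  define T where "T = max 1 (2*R/\<epsilon>\<^sub>0 + 1)"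
  define C where "C = A * (2*R) powr m"
  show ?thesis
  proof (intro exI conjI allI impI)
    show "1 \<le> T" unfolding T_def by simp
    show "0 \<le> C" unfolding C_def using A by simp
    fix t assume t: "T \<le> t"
    have tpos: "0 < t" using t unfolding T_def by linarith
    have "2*R/\<epsilon>\<^sub>0 < t" using t unfolding T_def by linarith
    hence e0: "2*R/t < \<epsilon>\<^sub>0" using tpos eps0_pos by (simp add: divide_less_eq mult.commute)
    have e1: "0 < 2*R/t" using R tpos by simp
    have "P t \<le> A * (2*R/t) powr m"
      using key[OF e1 e0] R tpos by simp
    also have "\<dots> = C * t powr (-m)"
      unfolding C_def using R tpos by (simp add: powr_divide powr_minus_divide)
    finally have Pt: "P t \<le> C * t powr (-m)" .
    have "(\<integral>\<^sup>+x. ennreal (J x * indicator {x. t < norm x} x) \<partial>lborel) = ennreal (P t)"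
      unfolding P_def by (rule nn_integral_eq_integral) (use intP J_nonneg in auto)
    then show "(\<integral>\<^sup>+x. ennreal (J x * indicator {x. t < norm x} x) \<partial>lborel) \<le> ennreal (C * t powr (-m))"
      using Pt by (simp add: ennreal_leI)
  qed
qed



lemma ennreal_le_suminf_term: fixes f :: "nat \<Rightarrow> ennreal" shows "f k \<le> suminf f"
  using sum_le_suminf[of f "{k}"] by (simp add: summableI)

lemma pw2: fixes T e :: real assumes "0 < T" shows "(2^k * T) powr e = (2 powr e)^k * T powr e"
  using assms by (simp add: powr_mult powr_realpow[symmetric] powr_powr mult.commute)

lemma moment_bound:
  fixes J :: "'a::euclidean_space \<Rightarrow> real" and m \<beta> T C :: real
  assumes J_int: "integrable lborel J"
    and J_nonneg: "\<And>x. J x \<ge> 0"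
    and J_mass: "(\<integral>x. J x \<partial>lborel) = 1"
    and T: "1 \<le> T" and C: "0 \<le> C"
    and tail: "\<forall>t\<ge>T. (\<integral>\<^sup>+x. ennreal (J x * indicator {x. t < norm x} x) \<partial>lborel) \<le> ennreal (C * t powr (-m))"
    and b: "0 < \<beta>" "\<beta> < m"
  shows "(\<integral>\<^sup>+x. ennreal (J x * norm x powr \<beta>) \<partial>lborel)
     \<le> ennreal (T powr \<beta> + C * 2 powr \<beta> * T powr (\<beta> - m) / (1 - 2 powr (\<beta> - m)))"
proof -
  have Jm[measurable]: "J \<in> borel_measurable borel"
    using borel_measurable_integrable[OF J_int] by simp
  define q where "q = 2 powr (\<beta> - m)"
  have q: "0 < q" "q < 1" unfolding q_def using b powr_less_mono[of "\<beta> - m" 0 2] by auto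
  define c where "c k = (2^(Suc k) * T) powr \<beta>" for k :: nat
  define g where "g k x = ennreal (c k) * ennreal (J x * indicator {x. 2^k*T < norm x} x)" for k :: nat and x :: 'a
  have gm[measurable]: "g k \<in> borel_measurable lborel" for k unfolding g_def by measurable
  have pw: "ennreal (J x * norm x powr \<beta>) \<le> ennreal (J x * T powr \<beta>) + (\<Sum>k. g k x)" for x
  proof (cases "norm x \<le> T")
    case True
    have "J x * norm x powr \<beta> \<le> J x * T powr \<beta>"
      using True b J_nonneg[of x] by (intro mult_left_mono powr_mono2) auto
    then show ?thesis by (intro add_increasing2) (auto intro: ennreal_leI)
  next
    case False
    have ex: "\<exists>n. norm x \<le> 2^n * T"
    proof -
      obtain n where "norm x / T < 2^n" using real_arch_pow[of 2 "norm x / T"] by auto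
      then show ?thesis using T by (auto simp: divide_less_eq intro!: exI[of _ n])
    qed
    define n where "n = (LEAST n. norm x \<le> 2^n * T)"
    have n1: "norm x \<le> 2^n * T" unfolding n_def by (rule LeastI_ex[OF ex])
    have n0: "n \<noteq> 0" using n1 False by (cases n) auto
    then obtain k where k: "n = Suc k" by (cases n) auto
    have "\<not> norm x \<le> 2^k * T" using not_less_Least[of k "\<lambda>n. norm x \<le> 2^n * T"] k n_def by auto
    hence k1: "2^k * T < norm x" by simp
    have "J x * norm x powr \<beta> \<le> c k * (J x * indicator {x. 2^k*T < norm x} x)"
      unfolding c_def using k1 n1 k J_nonneg[of x] b
      by (auto simp: mult.commute[of _ "J x"] intro!: mult_left_mono powr_mono2)
    hence "ennreal (J x * norm x powr \<beta>) \<le> g k x"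
      unfolding g_def using J_nonneg[of x] by (simp add: ennreal_mult[symmetric] ennreal_leI c_def)
    also have "\<dots> \<le> (\<Sum>k. g k x)" by (rule ennreal_le_suminf_term)
    finally show ?thesis by (intro add_increasing) auto
  qed
  have "(\<integral>\<^sup>+x. ennreal (J x * norm x powr \<beta>) \<partial>lborel)
      \<le> (\<integral>\<^sup>+x. ennreal (J x * T powr \<beta>) + (\<Sum>k. g k x) \<partial>lborel)"
    by (intro nn_integral_mono pw)
  also have "\<dots> = (\<integral>\<^sup>+x. ennreal (J x * T powr \<beta>) \<partial>lborel) + (\<integral>\<^sup>+x. (\<Sum>k. g k x) \<partial>lborel)"
    by (rule nn_integral_add) auto
  also have "(\<integral>\<^sup>+x. ennreal (J x * T powr \<beta>) \<partial>lborel) = ennreal (T powr \<beta>)"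
  proof -
    have "(\<integral>\<^sup>+x. ennreal (J x * T powr \<beta>) \<partial>lborel) = ennreal (\<integral>x. J x * T powr \<beta> \<partial>lborel)"
      by (rule nn_integral_eq_integral) (use J_int J_nonneg in auto)
    then show ?thesis using J_mass by simp
  qed
  also have "(\<integral>\<^sup>+x. (\<Sum>k. g k x) \<partial>lborel) = (\<Sum>k. \<integral>\<^sup>+x. g k x \<partial>lborel)"
    by (rule nn_integral_suminf) auto
  also have "\<dots> \<le> (\<Sum>k. ennreal (C * 2 powr \<beta> * T powr (\<beta> - m) * q ^ k))"
  proof (intro suminf_le summableI)
    fix k
    have Tk: "T \<le> 2^k * T" using T by simp
    have "(\<integral>\<^sup>+x. g k x \<partial>lborel) = ennreal (c k) * (\<integral>\<^sup>+x. ennreal (J x * indicator {x. 2^k*T < norm x} x) \<partial>lborel)"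
      unfolding g_def by (rule nn_integral_cmult) auto
    also have "\<dots> \<le> ennreal (c k) * ennreal (C * (2^k * T) powr (-m))"
      using tail Tk by (intro mult_left_mono) auto
    also have "\<dots> = ennreal (c k * (C * (2^k * T) powr (-m)))"
      using C c_def by (simp add: ennreal_mult)
    also have "c k * (C * (2^k * T) powr (-m)) = C * 2 powr \<beta> * T powr (\<beta> - m) * q ^ k"
    proof -
      have "c k = 2 powr \<beta> * (2^k * T) powr \<beta>"
        unfolding c_def using T by (simp add: powr_mult[symmetric] mult.assoc)
      moreover have "(2^k * T) powr \<beta> * (2^k * T) powr (-m) = q^k * T powr (\<beta> - m)"
      proof -
        have "(2^k * T) powr \<beta> * (2^k * T) powr (-m) = (2^k * T) powr (\<beta> - m)"
          by (metis powr_add diff_conv_add_uminus)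
        also have "\<dots> = q^k * T powr (\<beta> - m)" unfolding q_def using T by (intro pw2) auto
        finally show ?thesis .
      qed
      ultimately show ?thesis by (simp add: algebra_simps)
    qed
    finally show "(\<integral>\<^sup>+x. g k x \<partial>lborel) \<le> ennreal (C * 2 powr \<beta> * T powr (\<beta> - m) * q ^ k)" .
  qed
  also have "\<dots> = ennreal (\<Sum>k. C * 2 powr \<beta> * T powr (\<beta> - m) * q ^ k)"
    using q C T by (intro suminf_ennreal2) (auto intro!: summable_mult summable_geometric)
  also have "(\<Sum>k. C * 2 powr \<beta> * T powr (\<beta> - m) * q ^ k) = C * 2 powr \<beta> * T powr (\<beta> - m) / (1 - q)"
    using q by (simp add: suminf_mult suminf_geometric summable_geometric)
  also have "ennreal (T powr \<beta>) + ennreal (C * 2 powr \<beta> * T powr (\<beta> - m) / (1 - q))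
      = ennreal (T powr \<beta> + C * 2 powr \<beta> * T powr (\<beta> - m) / (1 - q))"
    by (rule ennreal_plus[symmetric]) (use q C in auto)
  finally show ?thesis unfolding q_def by (auto intro: add_left_mono)
qed



lemma ratio_bound:
  fixes s :: real assumes s: "0 < s"
  shows "s / (1 - 2 powr (-s)) \<le> 1 / ln 2 + s"
proof -
  define l where "l = ln (2::real)"
  define E where "E = 2 powr s"
  have l: "0 < l" unfolding l_def by simp
  have E: "1 + s * l \<le> E" unfolding E_def l_def powr_def using exp_ge_add_one_self[of "s * ln 2"] by simp
  have El: "s * l \<le> E - 1" using E by simp
  have E1: "0 < E - 1" using El s l by (smt (verit) mult_pos_pos)
  have Epos: "0 < E" using E1 by simp
  have h: "2 powr (-s) = 1 / E" unfolding E_def by (simp add: powr_minus_divide)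
  have "s / (1 - 2 powr (-s)) = s * E / (E - 1)" unfolding h using Epos E1 by (simp add: field_simps)
  also have "\<dots> \<le> 1 / l + s"
  proof -
    have "s \<le> (E - 1) / l" using El l by (simp add: le_divide_eq)
    hence "s * E \<le> (1 / l + s) * (E - 1)" by (simp add: algebra_simps)
    thus ?thesis using E1 by (simp add: divide_le_eq)
  qed
  finally show ?thesis unfolding l_def .
qed

lemma final_bound:
  fixes m \<beta> T C :: real
  assumes "0 < \<beta>" "\<beta> < m" "m < 2" "1 \<le> T" "0 \<le> C"
  shows "(m - \<beta>) * (T powr \<beta> + C * 2 powr \<beta> * T powr (\<beta> - m) / (1 - 2 powr (\<beta> - m)))
     \<le> 2 * T powr 2 + C * 4 * (1 / ln 2 + 2)"
proof -
  have s: "0 < m - \<beta>" "m - \<beta> \<le> 2" using assms by auto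
  have d: "0 < 1 - 2 powr (\<beta> - m)" using assms powr_less_mono[of "\<beta> - m" 0 2] by simp
  have t1: "(m - \<beta>) * T powr \<beta> \<le> 2 * T powr 2"
  proof (rule mult_mono)
    show "T powr \<beta> \<le> T powr 2" using assms by (intro powr_mono) auto
  qed (use s in auto)
  have r: "(m - \<beta>) / (1 - 2 powr (\<beta> - m)) \<le> 1 / ln 2 + 2"
    using ratio_bound[OF s(1)] s by simp
  have p2: "2 powr \<beta> \<le> 4" using powr_mono[of \<beta> 2 2] assms by simp
  have pT: "T powr (\<beta> - m) \<le> 1" using powr_mono[of "\<beta> - m" 0 T] assms by simp
  have "(m - \<beta>) * (C * 2 powr \<beta> * T powr (\<beta> - m) / (1 - 2 powr (\<beta> - m)))
      = C * (2 powr \<beta> * T powr (\<beta> - m)) * ((m - \<beta>) / (1 - 2 powr (\<beta> - m)))" by simp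
  also have "\<dots> \<le> C * 4 * (1 / ln 2 + 2)"
  proof (intro mult_mono mult_left_mono)
    show "2 powr \<beta> * T powr (\<beta> - m) \<le> 4" using p2 pT
      using mult_mono[OF p2 pT] by simp
  qed (use assms d s r in \<open>auto intro!: divide_nonneg_pos\<close>)
  finally show ?thesis using t1 by (simp add: algebra_simps)
qed

theorem propositionA1:
  fixes a J u :: "'a::euclidean_space \<Rightarrow> real" and m \<epsilon>\<^sub>0 :: real
  assumes m_pos: "0 < m" and m_lt2: "m < 2"
    and a_cont: "continuous_on UNIV a"
    and a_bdd: "bounded (range a)"
    and a_pos_part: "\<exists>x. a x > 0"
    and a_limsup: "Limsup at_infinity (\<lambda>x. ereal (a x)) < 0"
    and J_int: "integrable lborel J"
    and J_nonneg: "\<And>x. J x \<ge> 0"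
    and J_radial: "\<And>x y. norm x = norm y \<Longrightarrow> J x = J y"
    and J_mass: "(\<integral>x. J x \<partial>lborel) = 1"
    and eps0_pos: "\<epsilon>\<^sub>0 > 0"
    and u_cont: "continuous_on UNIV u"
    and u_supp: "compact (closure {x. u x \<noteq> 0})"
    and u_nonneg: "\<And>x. u x \<ge> 0"
    and u_nontriv: "\<exists>x. u x \<noteq> 0"
    and subsol: "\<And>\<epsilon> x. 0 < \<epsilon> \<Longrightarrow> \<epsilon> < \<epsilon>\<^sub>0 \<Longrightarrow>
        (1 / \<epsilon> powr m) * (conv (rescaled_kernel J \<epsilon>) u x - u x) + u x * (a x - u x) \<ge> 0"
  shows "Limsup (at_left m)
           (\<lambda>\<beta>. ennreal (m - \<beta>) * (\<integral>\<^sup>+ x. ennreal (J x * norm x powr \<beta>) \<partial>lborel)) < \<infinity>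
         \<and> (\<forall>\<beta>. 0 < \<beta> \<and> \<beta> < m \<longrightarrow> (\<integral>\<^sup>+ x. ennreal (J x * norm x powr \<beta>) \<partial>lborel) < \<infinity>)"
  proof -
  obtain C T where T: "1 \<le> T" and C: "0 \<le> C" and tail: "\<forall>t\<ge>T.
     (\<integral>\<^sup>+x. ennreal (J x * indicator {x. t < norm x} x) \<partial>lborel) \<le> ennreal (C * t powr (-m))"
    using tail_bound[OF m_pos a_bdd J_int J_nonneg J_mass eps0_pos u_cont u_supp u_nonneg u_nontriv subsol] by blast
  define B where "B \<beta> = T powr \<beta> + C * 2 powr \<beta> * T powr (\<beta> - m) / (1 - 2 powr (\<beta> - m))" for \<beta>
  define K where "K = 2 * T powr 2 + C * 4 * (1 / ln 2 + 2)"
  have mb: "(\<integral>\<^sup>+x. ennreal (J x * norm x powr \<beta>) \<partial>lborel) \<le> ennreal (B \<beta>)" if "0 < \<beta>" "\<beta> < m" for \<beta>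
    unfolding B_def by (rule moment_bound[OF J_int J_nonneg J_mass T C tail that])
  have "Limsup (at_left m)
           (\<lambda>\<beta>. ennreal (m - \<beta>) * (\<integral>\<^sup>+ x. ennreal (J x * norm x powr \<beta>) \<partial>lborel)) \<le> ennreal K"
  proof (rule Limsup_bounded)
    show "\<forall>\<^sub>F \<beta> in at_left m. ennreal (m - \<beta>) * (\<integral>\<^sup>+ x. ennreal (J x * norm x powr \<beta>) \<partial>lborel) \<le> ennreal K"
    proof (rule eventually_mono[OF eventually_at_left_real[OF m_pos]])
      fix \<beta> assume "\<beta> \<in> {0<..<m}"
      hence b: "0 < \<beta>" "\<beta> < m" by auto
      have "ennreal (m - \<beta>) * (\<integral>\<^sup>+ x. ennreal (J x * norm x powr \<beta>) \<partial>lborel) \<le> ennreal (m - \<beta>) * ennreal (B \<beta>)"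
        by (intro mult_left_mono mb b) auto
      also have "\<dots> = ennreal ((m - \<beta>) * B \<beta>)" by (rule ennreal_mult'[symmetric]) (use b in simp)
      also have "\<dots> \<le> ennreal K"
        unfolding B_def K_def by (intro ennreal_leI final_bound b m_lt2 T C)
      finally show "ennreal (m - \<beta>) * (\<integral>\<^sup>+ x. ennreal (J x * norm x powr \<beta>) \<partial>lborel) \<le> ennreal K" .
    qed
  qed
  also have "ennreal K < \<infinity>" by simp
  finally have L: "Limsup (at_left m)
           (\<lambda>\<beta>. ennreal (m - \<beta>) * (\<integral>\<^sup>+ x. ennreal (J x * norm x powr \<beta>) \<partial>lborel)) < \<infinity>" .
  moreover have "\<forall>\<beta>. 0 < \<beta> \<and> \<beta> < m \<longrightarrow> (\<integral>\<^sup>+ x. ennreal (J x * norm x powr \<beta>) \<partial>lborel) < \<infinity>"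
  proof (intro allI impI)
    fix \<beta> :: real assume "0 < \<beta> \<and> \<beta> < m"
    hence "(\<integral>\<^sup>+ x. ennreal (J x * norm x powr \<beta>) \<partial>lborel) \<le> ennreal (B \<beta>)" using mb by auto
    also have "ennreal (B \<beta>) < \<infinity>" by simp
    finally show "(\<integral>\<^sup>+ x. ennreal (J x * norm x powr \<beta>) \<partial>lborel) < \<infinity>" .
  qed
  ultimately show ?thesis by blast
qed

end
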